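(* Let $\mathcal{G}$ be a finite tree and let $i,j$ be adjacent nodes, with $d_i$ the degree of $i$ in $\mathcal{G}$. Let $\mathcal{G}_i$ be the connected component containing $i$ of the graph obtained from $\mathcal{G}$ by deleting the edge $(i,j)$, with edge set $\mathcal{E}(\mathcal{G}_i)$. Then the access time of the begrudgingly backtracking random walk from $i$ to $j$ is $$\tilde{\mathtt{t}}(i,j)=1+2|\mathcal{E}(\mathcal{G}_i)|\cdot\frac{d_i-1}{d_i}.$$
   Context: Begrudgingly backtracking random walk (BBRW) on $\mathcal{G}$: $x_1$ is uniform on the neighbors of $x_0$; for $n\ge0$, given $x_n=u,x_{n+1}=v$, $x_{n+2}$ is uniform on $\mathcal{N}(v)\setminus\{u\}$ if this set is nonempty, and $x_{n+2}=u$ otherwise. For a node $k$, $T_k=\min\{n\ge0:x_n=k\}$ and the access time is $\tilde{\mathtt{t}}(i,k)=\mathbb{E}[T_k\mid x_0=i]$. *)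

theory Defs
  imports "HOL-Analysis.Analysis" "HOL-Library.Extended_Nonnegative_Real"
begin

definition graph :: "'a set \<Rightarrow> 'a set set \<Rightarrow> bool" where
  "graph V E \<longleftrightarrow> finite V \<and> (\<forall>e\<in>E. e \<subseteq> V \<and> card e = 2)"

definition nbrs :: "'a set set \<Rightarrow> 'a \<Rightarrow> 'a set" where
  "nbrs E v = {u. {u, v} \<in> E}"

definition degree :: "'a set set \<Rightarrow> 'a \<Rightarrow> nat" where
  "degree E v = card (nbrs E v)"

definition is_walk :: "'a set set \<Rightarrow> 'a list \<Rightarrow> bool" where
  "is_walk E xs \<longleftrightarrow> xs \<noteq> [] \<and> (\<forall>m. Suc m < length xs \<longrightarrow> {xs ! m, xs ! Suc m} \<in> E)"

definition reachable :: "'a set set \<Rightarrow> 'a \<Rightarrow> 'a \<Rightarrow> bool" where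
  "reachable E u v \<longleftrightarrow> (\<exists>xs. is_walk E xs \<and> hd xs = u \<and> last xs = v)"

definition connected_graph :: "'a set \<Rightarrow> 'a set set \<Rightarrow> bool" where
  "connected_graph V E \<longleftrightarrow> (\<forall>u\<in>V. \<forall>v\<in>V. reachable E u v)"

definition is_cycle :: "'a set set \<Rightarrow> 'a list \<Rightarrow> bool" where
  "is_cycle E xs \<longleftrightarrow> is_walk E xs \<and> distinct xs \<and> length xs \<ge> 3 \<and> {last xs, hd xs} \<in> E"

definition tree :: "'a set \<Rightarrow> 'a set set \<Rightarrow> bool" where
  "tree V E \<longleftrightarrow> graph V E \<and> V \<noteq> {} \<and> connected_graph V E \<and> \<not> (\<exists>xs. is_cycle E xs)"

definition comp_vertices :: "'a set \<Rightarrow> 'a set set \<Rightarrow> 'a \<Rightarrow> 'a \<Rightarrow> 'a set" where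
  "comp_vertices V E i j = {v\<in>V. reachable (E - {{i, j}}) i v}"

definition comp_edges :: "'a set \<Rightarrow> 'a set set \<Rightarrow> 'a \<Rightarrow> 'a \<Rightarrow> 'a set set" where
  "comp_edges V E i j = {e \<in> E - {{i, j}}. e \<subseteq> comp_vertices V E i j}"

text \<open>Probability that x_1 = w given x_0 = v: uniform on the neighbours of v.\<close>
definition first_step :: "'a set set \<Rightarrow> 'a \<Rightarrow> 'a \<Rightarrow> real" where
  "first_step E v w = (if w \<in> nbrs E v then 1 / real (card (nbrs E v)) else 0)"

text \<open>Probability that x_{n+2} = w given x_n = u, x_{n+1} = v.\<close>
definition bb_step :: "'a set set \<Rightarrow> 'a \<Rightarrow> 'a \<Rightarrow> 'a \<Rightarrow> real" where
  "bb_step E u v w =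
     (if nbrs E v - {u} \<noteq> {}
      then (if w \<in> nbrs E v - {u} then 1 / real (card (nbrs E v - {u})) else 0)
      else (if w = u then 1 else 0))"

text \<open>Probability of the trajectory prefix x_0 ... x_n = xs, given x_0 = xs!0.\<close>
definition path_prob :: "'a set set \<Rightarrow> 'a list \<Rightarrow> real" where
  "path_prob E xs =
     (if length xs \<ge> 2 then first_step E (xs ! 0) (xs ! 1) else 1) *
     (\<Prod>m<length xs - 2. bb_step E (xs ! m) (xs ! Suc m) (xs ! Suc (Suc m)))"

text \<open>P(T_k > n | x_0 = i): total probability of prefixes x_0..x_n avoiding k.\<close>
definition tail_prob :: "'a set \<Rightarrow> 'a set set \<Rightarrow> 'a \<Rightarrow> 'a \<Rightarrow> nat \<Rightarrow> real" where
  "tail_prob V E i k n =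
     (\<Sum>xs\<in>{xs. length xs = Suc n \<and> xs ! 0 = i \<and> set xs \<subseteq> V \<and> k \<notin> set xs}. path_prob E xs)"

text \<open>Access time E[T_k | x_0 = i] = sum over n of P(T_k > n), as an extended
  nonnegative real (infinite if T_k is infinite with positive probability).\<close>
definition access_time :: "'a set \<Rightarrow> 'a set set \<Rightarrow> 'a \<Rightarrow> 'a \<Rightarrow> ennreal" where
  "access_time V E i k = (\<Sum>n. ennreal (tail_prob V E i k n))"

end

theory Submission
  imports Defs
begin

fun bbp :: "('a \<Rightarrow> 'a \<Rightarrow> 'a \<Rightarrow> real) \<Rightarrow> 'a \<Rightarrow> 'a \<Rightarrow> 'a list \<Rightarrow> real" where
  "bbp K u v [] = 1"
| "bbp K u v (w # ys) = K u v w * bbp K v w ys"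

fun lastst :: "'a \<Rightarrow> 'a \<Rightarrow> 'a list \<Rightarrow> 'a \<times> 'a" where
  "lastst u v [] = (u, v)"
| "lastst u v (w # ys) = lastst v w ys"

definition Ls :: "'a set \<Rightarrow> nat \<Rightarrow> 'a list set" where
  "Ls X n = {ys. length ys = n \<and> set ys \<subseteq> X}"

lemma Ls_0: "Ls X 0 = {[]}" by (auto simp: Ls_def)

lemma Ls_Suc: "Ls X (Suc n) = (\<lambda>(w, ys). w # ys) ` (X \<times> Ls X n)"
proof (intro set_eqI iffI)
  fix xs assume a: "xs \<in> Ls X (Suc n)"
  then have "length xs = Suc n" by (simp add: Ls_def)
  then obtain w ys where xs: "xs = w # ys" by (metis length_Suc_conv)
  have "(w, ys) \<in> X \<times> Ls X n" using a xs unfolding Ls_def by simp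
  then show "xs \<in> (\<lambda>(w, ys). w # ys) ` (X \<times> Ls X n)" unfolding xs by (rule rev_image_eqI[of "(w, ys)"]) simp_all
next
  fix xs assume "xs \<in> (\<lambda>(w, ys). w # ys) ` (X \<times> Ls X n)"
  then obtain p where p: "p \<in> X \<times> Ls X n" "xs = (\<lambda>(w, ys). w # ys) p" by (rule imageE)
  obtain w ys where "p = (w, ys)" by (cases p)
  then have "w \<in> X" "ys \<in> Ls X n" "xs = w # ys" using p by auto
  then show "xs \<in> Ls X (Suc n)" unfolding Ls_def by simp
qed

lemma finite_Ls: "finite X \<Longrightarrow> finite (Ls X n)"
proof -
  assume "finite X"
  then have "finite {xs. set xs \<subseteq> X \<and> length xs = n}" by (rule finite_lists_length_eq)
  moreover have "Ls X n = {xs. set xs \<subseteq> X \<and> length xs = n}" by (auto simp: Ls_def)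
  ultimately show ?thesis by simp
qed

lemma sum_Ls_Suc:
  assumes "finite X"
  shows "(\<Sum>ys\<in>Ls X (Suc n). F ys) = (\<Sum>w\<in>X. \<Sum>ys\<in>Ls X n. F (w # ys))"
proof -
  have inj: "inj_on (\<lambda>(w, ys). w # ys) (X \<times> Ls X n)" by (auto simp: inj_on_def)
  have "(\<Sum>ys\<in>Ls X (Suc n). F ys) = (\<Sum>p\<in>X \<times> Ls X n. F ((\<lambda>(w, ys). w # ys) p))"
    unfolding Ls_Suc by (rule sum.reindex[OF inj, unfolded comp_def])
  also have "\<dots> = (\<Sum>w\<in>X. \<Sum>ys\<in>Ls X n. F (w # ys))"
    unfolding sum.cartesian_product by (rule sum.cong) auto
  finally show ?thesis .
qed

lemma bbp_nonneg: "(\<And>a b c. K a b c \<ge> 0) \<Longrightarrow> bbp K u v ys \<ge> 0"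
  by (induction ys arbitrary: u v) auto

lemma valid_lastst:
  assumes "\<And>u v w. P u v \<Longrightarrow> w \<in> X \<Longrightarrow> K u v w \<noteq> 0 \<Longrightarrow> P v w"
  shows "P u v \<Longrightarrow> set ys \<subseteq> X \<Longrightarrow> bbp K u v ys \<noteq> 0 \<Longrightarrow> case_prod P (lastst u v ys)"
proof (induction ys arbitrary: u v)
  case Nil then show ?case by simp
next
  case (Cons w ys)
  then have "K u v w \<noteq> 0" "bbp K v w ys \<noteq> 0" by auto
  with Cons assms have "P v w" by auto
  with Cons \<open>bbp K v w ys \<noteq> 0\<close> show ?case by auto
qed

lemma hitting_sums:
  fixes K :: "'a \<Rightarrow> 'a \<Rightarrow> 'a \<Rightarrow> real" and h :: "'a \<Rightarrow> 'a \<Rightarrow> real"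
  assumes fin: "finite X"
    and Knn: "\<And>a b c. K a b c \<ge> 0"
    and eq: "\<And>u v. P u v \<Longrightarrow> h u v = 1 + (\<Sum>w\<in>X. K u v w * h v w)"
    and step: "\<And>u v w. P u v \<Longrightarrow> w \<in> X \<Longrightarrow> K u v w \<noteq> 0 \<Longrightarrow> P v w"
    and hnn: "\<And>u v. P u v \<Longrightarrow> h u v \<ge> 0"
    and hB: "\<And>u v. P u v \<Longrightarrow> h u v \<le> B"
    and P0: "P u0 v0"
  shows "(\<lambda>n. \<Sum>ys\<in>Ls X n. bbp K u0 v0 ys) sums h u0 v0"
proof -
  define T where "T n u v = (\<Sum>ys\<in>Ls X n. bbp K u v ys)" for n u v
  define R where "R n u v = (\<Sum>ys\<in>Ls X n. bbp K u v ys * case_prod h (lastst u v ys))" for n u v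
  have T0: "T 0 u v = 1" for u v by (simp add: T_def Ls_0)
  have TS: "T (Suc n) u v = (\<Sum>w\<in>X. K u v w * T n v w)" for n u v
    unfolding T_def by (simp add: sum_Ls_Suc[OF fin] sum_distrib_left)
  have RS: "R (Suc n) u v = (\<Sum>w\<in>X. K u v w * R n v w)" for n u v
    unfolding R_def by (simp add: sum_Ls_Suc[OF fin] sum_distrib_left mult.assoc)
  have key: "P u v \<Longrightarrow> h u v = (\<Sum>n<N. T n u v) + R N u v" for N u v
  proof (induction N arbitrary: u v)
    case 0 then show ?case by (simp add: R_def Ls_0)
  next
    case (Suc N)
    have "(\<Sum>n<Suc N. T n u v) + R (Suc N) u v
        = 1 + (\<Sum>n<N. \<Sum>w\<in>X. K u v w * T n v w) + (\<Sum>w\<in>X. K u v w * R N v w)"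
      by (subst sum.lessThan_Suc_shift) (simp add: T0 TS RS)
    also have "\<dots> = 1 + (\<Sum>w\<in>X. K u v w * ((\<Sum>n<N. T n v w) + R N v w))"
      by (simp add: sum.swap[of _ X] sum_distrib_left[symmetric] distrib_left sum.distrib)
    also have "\<dots> = 1 + (\<Sum>w\<in>X. K u v w * h v w)"
    proof -
      have "K u v w * ((\<Sum>n<N. T n v w) + R N v w) = K u v w * h v w" if "w \<in> X" for w
      proof (cases "K u v w = 0")
        case False
        then have "P v w" using step[OF Suc.prems that] by auto
        then show ?thesis using Suc.IH by simp
      qed simp
      then show ?thesis by (metis (no_types, lifting) sum.cong)
    qed
    also have "\<dots> = h u v" using eq[OF Suc.prems] by simp
    finally show ?case by simp
  qed
  have Tnn: "T n u v \<ge> 0" for n u v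
    unfolding T_def by (intro sum_nonneg bbp_nonneg Knn)
  have Rb: "0 \<le> R n u0 v0 \<and> R n u0 v0 \<le> B * T n u0 v0" for n
  proof -
    have t: "0 \<le> bbp K u0 v0 ys * case_prod h (lastst u0 v0 ys) \<and>
             bbp K u0 v0 ys * case_prod h (lastst u0 v0 ys) \<le> B * bbp K u0 v0 ys"
      if "ys \<in> Ls X n" for ys
    proof (cases "bbp K u0 v0 ys = 0")
      case False
      have "case_prod P (lastst u0 v0 ys)"
        using valid_lastst[of P X K, OF step P0] that False by (auto simp: Ls_def)
      then have "0 \<le> case_prod h (lastst u0 v0 ys) \<and> case_prod h (lastst u0 v0 ys) \<le> B"
        using hnn hB by (auto split: prod.splits)
      moreover have "bbp K u0 v0 ys \<ge> 0" by (rule bbp_nonneg[OF Knn])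
      ultimately show ?thesis by (simp add: mult.commute[of B] mult_left_mono)
    qed simp
    show ?thesis unfolding R_def T_def sum_distrib_left
      using t by (auto intro: sum_nonneg sum_mono)
  qed
  have bound: "(\<Sum>n<N. T n u0 v0) \<le> h u0 v0" for N
    using key[OF P0, of N] Rb[of N] by linarith
  have summ: "summable (\<lambda>n. T n u0 v0)"
    by (rule summableI_nonneg_bounded[OF Tnn bound])
  have T0lim: "(\<lambda>n. T n u0 v0) \<longlonglongrightarrow> 0" by (rule summable_LIMSEQ_zero[OF summ])
  have "(\<lambda>n. B * T n u0 v0) \<longlonglongrightarrow> B * 0" by (intro tendsto_mult tendsto_const T0lim)
  have Rlim: "(\<lambda>n. R n u0 v0) \<longlonglongrightarrow> 0"
  proof (rule tendsto_sandwich[of "\<lambda>_. 0" _ sequentially "\<lambda>n. B * T n u0 v0"])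
    show "\<forall>\<^sub>F n in sequentially. 0 \<le> R n u0 v0" using Rb by simp
    show "\<forall>\<^sub>F n in sequentially. R n u0 v0 \<le> B * T n u0 v0" using Rb by simp
    show "(\<lambda>_. 0) \<longlonglongrightarrow> (0::real)" by (rule tendsto_const)
    show "(\<lambda>n. B * T n u0 v0) \<longlonglongrightarrow> 0" using \<open>(\<lambda>n. B * T n u0 v0) \<longlonglongrightarrow> B * 0\<close> by simp
  qed
  have "(\<lambda>N. h u0 v0 - R N u0 v0) \<longlonglongrightarrow> h u0 v0 - 0" by (intro tendsto_diff tendsto_const Rlim)
  moreover have "(\<lambda>N. h u0 v0 - R N u0 v0) = (\<lambda>N. \<Sum>n<N. T n u0 v0)"
  proof (rule ext)
    fix N show "h u0 v0 - R N u0 v0 = (\<Sum>n<N. T n u0 v0)" using key[OF P0, of N] by linarith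
  qed
  ultimately have "(\<lambda>N. \<Sum>n<N. T n u0 v0) \<longlonglongrightarrow> h u0 v0" by simp
  then show ?thesis unfolding sums_def T_def .
qed



lemma funpow_le: "a \<le> (b::nat) \<Longrightarrow> (f ^^ (b - a)) ((f ^^ a) x) = (f ^^ b) x"
proof -
  assume "a \<le> b"
  have "(f ^^ (b - a)) ((f ^^ a) x) = (f ^^ (b - a + a)) x" by (simp add: funpow_add)
  then show ?thesis using \<open>a \<le> b\<close> by simp
qed

lemma walk_single: "is_walk E [v]" by (simp add: is_walk_def)

lemma walk_tl: "is_walk E xs \<Longrightarrow> length xs \<ge> 2 \<Longrightarrow> is_walk E (tl xs)"
  unfolding is_walk_def
  by (cases xs) (auto simp: nth_Cons_Suc)

lemma walk_Cons: "is_walk E xs \<Longrightarrow> {v, hd xs} \<in> E \<Longrightarrow> is_walk E (v # xs)"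
  unfolding is_walk_def
proof (intro conjI allI impI)
  fix m assume a: "xs \<noteq> [] \<and> (\<forall>m. Suc m < length xs \<longrightarrow> {xs ! m, xs ! Suc m} \<in> E)"
    "{v, hd xs} \<in> E" "Suc m < length (v # xs)"
  show "{(v # xs) ! m, (v # xs) ! Suc m} \<in> E"
  proof (cases m)
    case 0 then show ?thesis using a by (simp add: hd_conv_nth)
  next
    case (Suc m') then show ?thesis using a by simp
  qed
qed simp

locale rt0 =
  fixes V :: "'a set" and E :: "'a set set" and j :: 'a and par :: "'a \<Rightarrow> 'a" and dist :: "'a \<Rightarrow> nat"
  assumes gr: "graph V E" and jV: "j \<in> V"
    and par_nb: "\<And>v. v \<in> V \<Longrightarrow> v \<noteq> j \<Longrightarrow> {v, par v} \<in> E"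
    and par_j: "par j = j"
    and dist_j: "dist j = 0"
    and dist_par: "\<And>v. v \<in> V \<Longrightarrow> v \<noteq> j \<Longrightarrow> dist (par v) = dist v - 1"
    and dist_0: "\<And>v. v \<in> V \<Longrightarrow> dist v = 0 \<Longrightarrow> v = j"
begin

lemma edge_V: "{a, b} \<in> E \<Longrightarrow> a \<in> V \<and> b \<in> V \<and> a \<noteq> b"
proof -
  assume "{a, b} \<in> E"
  then have "{a, b} \<subseteq> V" "card {a, b} = 2" using gr by (auto simp: graph_def)
  then show ?thesis by (cases "a = b") auto
qed

lemma par_V: "v \<in> V \<Longrightarrow> par v \<in> V"
proof -
  assume v: "v \<in> V"
  show "par v \<in> V"
  proof (cases "v = j")
    case True then show ?thesis using v par_j by simp
  next
    case False then show ?thesis using edge_V[OF par_nb[OF v False]] by simp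
  qed
qed

lemma P_V: "v \<in> V \<Longrightarrow> (par ^^ k) v \<in> V"
  by (induction k) (auto simp: par_V)

lemma P_j: "(par ^^ k) j = j"
  by (induction k) (auto simp: par_j)

lemma dist_P: "v \<in> V \<Longrightarrow> dist ((par ^^ k) v) = dist v - k"
proof (induction k)
  case (Suc k)
  let ?x = "(par ^^ k) v"
  have xV: "?x \<in> V" using P_V Suc by blast
  show ?case
  proof (cases "?x = j")
    case True
    then show ?thesis using Suc dist_j par_j by simp
  next
    case False
    then show ?thesis using Suc dist_par[OF xV] by simp
  qed
qed simp

lemma P_dist: "v \<in> V \<Longrightarrow> (par ^^ dist v) v = j"
  using dist_P[of v "dist v"] dist_0 P_V by auto

lemma P_ge: "v \<in> V \<Longrightarrow> k \<ge> dist v \<Longrightarrow> (par ^^ k) v = j"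
proof -
  assume "v \<in> V" "k \<ge> dist v"
  then have "(par ^^ k) v = (par ^^ (k - dist v)) ((par ^^ dist v) v)"
    using funpow_le[of "dist v" k par v] by simp
  then show ?thesis using P_dist[OF \<open>v \<in> V\<close>] P_j by simp
qed

lemma P_inj: "v \<in> V \<Longrightarrow> k < l \<Longrightarrow> k < dist v \<Longrightarrow> (par ^^ k) v \<noteq> (par ^^ l) v"
  using dist_P[of v k] dist_P[of v l] by auto

lemma P_notj: "v \<in> V \<Longrightarrow> k < dist v \<Longrightarrow> (par ^^ k) v \<noteq> j"
  using dist_P[of v k] dist_j by auto

lemma N_of_acyclic:
  assumes nc: "\<not> (\<exists>xs. is_cycle E xs)" and e: "{v, w} \<in> E"
  shows "(v \<noteq> j \<and> w = par v) \<or> (w \<noteq> j \<and> v = par w)"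
proof (rule ccontr)
  assume nN: "\<not> ?thesis"
  have vV: "v \<in> V" and wV: "w \<in> V" and vw: "v \<noteq> w" using edge_V[OF e] by auto
  define P where "P x k = (par ^^ k) x" for x k
  have "P v (dist v) = P w (dist w)" unfolding P_def using P_dist[OF vV] P_dist[OF wV] by simp
  then have ex: "\<exists>q. P v (dist v) = P w q" by blast
  define p where "p = (LEAST p. \<exists>q. P v p = P w q)"
  have "\<exists>q. P v p = P w q" unfolding p_def by (rule LeastI_ex) (use ex in blast)
  define q where "q = (LEAST q. P v p = P w q)"
  have pq: "P v p = P w q" unfolding q_def by (rule LeastI_ex) fact
  have pmin: "P v k \<noteq> P w r" if "k < p" for k r
    using not_less_Least[OF that[unfolded p_def]] by blast
  have qmin: "P w r \<noteq> P v p" if "r < q" for r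
    using not_less_Least[OF that[unfolded q_def]] by auto
  have p_le: "p \<le> dist v" unfolding p_def by (rule Least_le) (use ex in blast)
  have q_le: "q \<le> dist w"
  proof (rule ccontr)
    assume "\<not> q \<le> dist w"
    then have "P w q = j" "P w (dist w) = j" using P_ge[OF wV] by (auto simp: P_def)
    then show False using qmin[of "dist w"] \<open>\<not> q \<le> dist w\<close> pq by auto
  qed
  define f where "f k = (if k \<le> p then P v k else P w (p + q - k))" for k
  define cyc where "cyc = map f [0..<p+q+1]"
  have len: "length cyc = p + q + 1" by (simp add: cyc_def)
  have nth: "k < p + q + 1 \<Longrightarrow> cyc ! k = f k" for k by (simp add: cyc_def nth_map del: upt_Suc)
  have P0: "P x 0 = x" for x by (simp add: P_def)
  have P1: "P x 1 = par x" for x by (simp add: P_def)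
  have PS: "P x (Suc k) = par (P x k)" for x k by (simp add: P_def)
  have ge2: "p + q \<ge> 2"
  proof (rule ccontr)
    assume "\<not> p + q \<ge> 2"
    then consider "p = 0" "q = 0" | "p = 0" "q = 1" | "p = 1" "q = 0" by linarith
    then show False
    proof cases
      case 1 then show ?thesis using pq vw P0 by simp
    next
      case 2 then have "v = par w" using pq P0 P1 by simp
      then show ?thesis using nN vw par_j by auto
    next
      case 3 then have "w = par v" using pq P0 P1 by simp
      then show ?thesis using nN vw par_j by auto
    qed
  qed
  have inj: "inj_on f {0..<p+q+1}"
  proof (rule linorder_inj_onI')
    fix k l assume kin: "k \<in> {0..<p+q+1}" and lin: "l \<in> {0..<p+q+1}" and kl: "k < l"
    show "f k \<noteq> f l"
    proof (cases "l \<le> p")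
      case True
      then show ?thesis using P_inj[OF vV kl] kl p_le by (simp add: f_def P_def)
    next
      case lp: False
      show ?thesis
      proof (cases "k \<le> p")
        case True
        show ?thesis
        proof (cases "k < p")
          case True then show ?thesis using pmin lp \<open>k \<le> p\<close> by (simp add: f_def)
        next
          case False
          then have "k = p" using \<open>k \<le> p\<close> by simp
          moreover have "p + q - l < q" using lp lin by auto
          ultimately show ?thesis using qmin[of "p + q - l"] lp by (simp add: f_def)
        qed
      next
        case False
        have "p + q - l < p + q - k" "p + q - l < dist w" using kl lin False q_le by auto
        then have "(par ^^ (p + q - l)) w \<noteq> (par ^^ (p + q - k)) w" by (intro P_inj[OF wV])
        then show ?thesis using False lp by (simp add: f_def P_def)
      qed
    qed
  qed
  have dist_cyc: "distinct cyc" unfolding cyc_def distinct_map set_upt using inj by simp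
  have walk: "is_walk E cyc"
    unfolding is_walk_def
  proof (intro conjI allI impI)
    show "cyc \<noteq> []" using len by auto
    fix m assume m: "Suc m < length cyc"
    then have m': "Suc m < p + q + 1" using len by simp
    show "{cyc ! m, cyc ! Suc m} \<in> E"
    proof (cases "Suc m \<le> p")
      case True
      have "P v m \<in> V" "P v m \<noteq> j" using P_V[OF vV] P_notj[OF vV] True p_le by (auto simp: P_def)
      then have "{P v m, par (P v m)} \<in> E" by (rule par_nb)
      then show ?thesis using True m' by (simp add: nth f_def PS)
    next
      case False
      define r where "r = p + q - Suc m"
      have r: "r < q" "Suc r = p + q - m" using False m' by (auto simp: r_def)
      have fm: "f m = P w (Suc r)"
      proof (cases "m = p")
        case True then show ?thesis using pq r by (simp add: f_def)
      next
        case False then show ?thesis using \<open>\<not> Suc m \<le> p\<close> r by (simp add: f_def)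
      qed
      have fSm: "f (Suc m) = P w r" using False by (simp add: f_def r_def)
      have "P w r \<in> V" "P w r \<noteq> j" using P_V[OF wV] P_notj[OF wV] r q_le by (auto simp: P_def)
      then have "{P w r, par (P w r)} \<in> E" by (rule par_nb)
      then show ?thesis using m' fm fSm nth by (simp add: PS insert_commute)
    qed
  qed
  have "hd cyc = v"
  proof -
    have "cyc ! 0 = v" using nth[of 0] by (simp add: f_def P0)
    then show ?thesis using len by (cases cyc) auto
  qed
  moreover have "last cyc = w"
  proof -
    have "cyc \<noteq> []" using len by auto
    then have "last cyc = f (p + q)" using len nth[of "p+q"] by (simp add: last_conv_nth)
    also have "\<dots> = w" using pq P0 by (auto simp: f_def)
    finally show ?thesis .
  qed
  ultimately have "is_cycle E cyc" using walk dist_cyc len ge2 e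
    by (simp add: is_cycle_def insert_commute)
  then show False using nc by blast
qed

end

lemma rt0_exists:
  assumes g: "graph V E" and c: "connected_graph V E" and jV: "j \<in> V"
  shows "\<exists>par dist. rt0 V E j par dist"
proof -
  define wk where "wk v n = (\<exists>xs. is_walk E xs \<and> hd xs = v \<and> last xs = j \<and> length xs = Suc n)" for v n
  define dist where "dist v = (LEAST n. wk v n)" for v
  have edge_V: "{a, b} \<in> E \<Longrightarrow> a \<in> V \<and> b \<in> V" for a b using g unfolding graph_def by blast
  have exn: "\<exists>n. wk v n" if "v \<in> V" for v
  proof -
    have "reachable E v j" using c that jV unfolding connected_graph_def by simp
    then obtain xs where "is_walk E xs" "hd xs = v" "last xs = j"
      unfolding reachable_def by (elim exE conjE) simp
    moreover have "xs \<noteq> []" using \<open>is_walk E xs\<close> by (simp add: is_walk_def)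
    ultimately have "wk v (length xs - 1)" unfolding wk_def
      by (intro exI[of _ xs]) simp
    then show ?thesis by (rule exI)
  qed
  have wkd: "wk v (dist v)" if "v \<in> V" for v
    unfolding dist_def by (rule LeastI_ex) (rule exn[OF that])
  have dj: "dist j = 0"
  proof -
    have "wk j 0" unfolding wk_def by (intro exI[of _ "[j]"]) (simp add: walk_single)
    then have "(LEAST n. wk j n) \<le> 0" by (rule Least_le)
    then show ?thesis unfolding dist_def by simp
  qed
  have d0: "v = j" if vV0: "v \<in> V" and dv0: "dist v = 0" for v
  proof -
    obtain xs where xs: "is_walk E xs" "hd xs = v" "last xs = j" "length xs = Suc 0"
      using wkd[OF vV0] dv0 unfolding wk_def by auto
    then obtain x where "xs = [x]" by (metis length_0_conv length_Suc_conv)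
    then show ?thesis using xs by simp
  qed
  have exw: "\<exists>w. {v, w} \<in> E \<and> dist w = dist v - 1" if vV: "v \<in> V" and vj: "v \<noteq> j" for v
  proof -
    obtain xs where xs: "is_walk E xs" "hd xs = v" "last xs = j" "length xs = Suc (dist v)"
      using wkd[OF vV] unfolding wk_def by blast
    have dpos: "dist v \<ge> 1" using d0[OF vV] vj by (cases "dist v") auto
    obtain w rest where xsw: "xs = v # w # rest" using xs dpos
      by (cases xs; cases "tl xs") auto
    have "Suc 0 < length xs" by (simp add: xsw)
    then have "{xs ! 0, xs ! Suc 0} \<in> E" using xs(1) unfolding is_walk_def by blast
    then have e: "{v, w} \<in> E" by (simp add: xsw)
    have wV: "w \<in> V" using edge_V[OF e] by blast
    have "wk w (dist v - 1)" unfolding wk_def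
    proof (intro exI[of _ "tl xs"] conjI)
      show "is_walk E (tl xs)" by (rule walk_tl[OF xs(1)]) (simp add: xsw)
      show "hd (tl xs) = w" using xsw by simp
      show "last (tl xs) = j" using xs xsw by simp
      show "length (tl xs) = Suc (dist v - 1)" using xs dpos by simp
    qed
    then have le1: "dist w \<le> dist v - 1" unfolding dist_def by (rule Least_le)
    obtain ys where ys: "is_walk E ys" "hd ys = w" "last ys = j" "length ys = Suc (dist w)"
      using wkd[OF wV] unfolding wk_def by blast
    have yne: "ys \<noteq> []" using ys(1) by (simp add: is_walk_def)
    have "is_walk E (v # ys)" using walk_Cons[OF ys(1)] ys(2) e by simp
    then have "wk v (Suc (dist w))" unfolding wk_def using ys yne
      by (intro exI[of _ "v # ys"]) simp
    then have "dist v \<le> Suc (dist w)" unfolding dist_def by (rule Least_le)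
    with le1 have "dist w = dist v - 1" by linarith
    with e show ?thesis by blast
  qed
  define par where "par v = (if v = j then j else SOME w. {v, w} \<in> E \<and> dist w = dist v - 1)" for v
  have parp: "{v, par v} \<in> E \<and> dist (par v) = dist v - 1" if "v \<in> V" "v \<noteq> j" for v
    using someI_ex[OF exw[OF that]] that by (simp add: par_def)
  have pj: "par j = j" by (simp add: par_def)
  have "rt0 V E j par dist"
    apply unfold_locales
    subgoal by (rule g)
    subgoal by (rule jV)
    subgoal for v using parp by blast
    subgoal by (rule pj)
    subgoal by (rule dj)
    subgoal for v using parp by blast
    subgoal for v using d0 by blast
    done
  then show ?thesis by blast
qed



locale rt = rt0 +
  assumes N: "\<And>v w. {v, w} \<in> E \<Longrightarrow> (v \<noteq> j \<and> w = par v) \<or> (w \<noteq> j \<and> v = par w)"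
begin

definition ch :: "'a \<Rightarrow> 'a set" where "ch v = {c \<in> V. c \<noteq> j \<and> par c = v}"
definition up :: "'a \<Rightarrow> 'a set" where "up v = {x \<in> V. \<exists>k. (par ^^ k) x = v}"
definition desc :: "'a \<Rightarrow> 'a set" where "desc v = up v - {v}"
definition M :: "'a \<Rightarrow> nat" where "M v = card (desc v)"

lemma finV: "finite V" using gr by (simp add: graph_def)
lemma fin_ch: "finite (ch v)" using finV by (simp add: ch_def)
lemma fin_up: "finite (up v)" using finV by (simp add: up_def)

lemma cyc_free: "x \<in> V \<Longrightarrow> x \<noteq> j \<Longrightarrow> m \<ge> 1 \<Longrightarrow> (par ^^ m) x \<noteq> x"
  using P_inj[of x 0 m] dist_0 by fastforce

lemma par_par: "v \<in> V \<Longrightarrow> v \<noteq> j \<Longrightarrow> par (par v) \<noteq> v"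
  using cyc_free[of v 2] by (simp add: numeral_2_eq_2)

lemma dist_ch: "c \<in> ch v \<Longrightarrow> v \<noteq> j \<Longrightarrow> dist c = Suc (dist v)"
proof -
  assume c: "c \<in> ch v" "v \<noteq> j"
  then have "c \<in> V" "c \<noteq> j" "par c = v" by (auto simp: ch_def)
  then have "dist v = dist c - 1" using dist_par by auto
  moreover have "dist c \<noteq> 0" using dist_0 \<open>c \<in> V\<close> \<open>c \<noteq> j\<close> by auto
  moreover have "v \<in> V" using par_V \<open>c \<in> V\<close> \<open>par c = v\<close> by auto
  ultimately show ?thesis by simp
qed

lemma nbrs_eq: "v \<in> V \<Longrightarrow> v \<noteq> j \<Longrightarrow> nbrs E v = insert (par v) (ch v)"
proof (intro set_eqI iffI)
  fix w assume v: "v \<in> V" "v \<noteq> j" and "w \<in> nbrs E v"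
  then have e: "{w, v} \<in> E" by (simp add: nbrs_def)
  then have "w \<in> V" using edge_V by blast
  then show "w \<in> insert (par v) (ch v)" using N[OF e] by (auto simp: ch_def)
next
  fix w assume v: "v \<in> V" "v \<noteq> j" and w: "w \<in> insert (par v) (ch v)"
  show "w \<in> nbrs E v"
  proof (cases "w = par v")
    case True then show ?thesis using par_nb[OF v] by (simp add: nbrs_def insert_commute)
  next
    case False then have "w \<in> V" "w \<noteq> j" "par w = v" using w by (auto simp: ch_def)
    then show ?thesis using par_nb[of w] by (simp add: nbrs_def)
  qed
qed

lemma par_notin_ch: "v \<in> V \<Longrightarrow> v \<noteq> j \<Longrightarrow> par v \<notin> ch v"
  using par_par by (auto simp: ch_def)

lemma up_ch: "c \<in> V \<Longrightarrow> up c = insert c (desc c)"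
  by (auto simp: up_def desc_def intro: exI[of _ 0])

lemma desc_eq: "v \<in> V \<Longrightarrow> v \<noteq> j \<Longrightarrow> desc v = (\<Union>c\<in>ch v. up c)"
proof (intro set_eqI iffI)
  fix x assume v: "v \<in> V" "v \<noteq> j" and x: "x \<in> desc v"
  then obtain k where xV: "x \<in> V" and xv: "x \<noteq> v" and k: "(par ^^ k) x = v"
    by (auto simp: desc_def up_def)
  have "k \<noteq> 0" using xv k by (cases k) auto
  then obtain k' where k': "k = Suc k'" by (cases k) auto
  define c where "c = (par ^^ k') x"
  have pc: "par c = v" using k k' by (simp add: c_def)
  have cV: "c \<in> V" using P_V[OF xV] by (simp add: c_def)
  have "c \<noteq> j" using pc v par_j by auto
  then have "c \<in> ch v" using cV pc by (simp add: ch_def)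
  moreover have "x \<in> up c" using xV by (auto simp: up_def c_def)
  ultimately show "x \<in> (\<Union>c\<in>ch v. up c)" by blast
next
  fix x assume v: "v \<in> V" "v \<noteq> j" and "x \<in> (\<Union>c\<in>ch v. up c)"
  then obtain c k where c: "c \<in> ch v" and xV: "x \<in> V" and k: "(par ^^ k) x = c"
    by (auto simp: up_def)
  have "(par ^^ Suc k) x = v" using k c by (simp add: ch_def)
  moreover have "x \<noteq> v" using cyc_free[OF v, of "Suc k"] \<open>(par ^^ Suc k) x = v\<close> by auto
  ultimately show "x \<in> desc v" using xV unfolding desc_def up_def by blast
qed

lemma up_disj: "v \<in> V \<Longrightarrow> v \<noteq> j \<Longrightarrow> c1 \<in> ch v \<Longrightarrow> c2 \<in> ch v \<Longrightarrow> c1 \<noteq> c2 \<Longrightarrow> up c1 \<inter> up c2 = {}"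
proof (rule ccontr)
  assume v: "v \<in> V" "v \<noteq> j" and c: "c1 \<in> ch v" "c2 \<in> ch v" "c1 \<noteq> c2" and ne: "up c1 \<inter> up c2 \<noteq> {}"
  then obtain x a b where xV: "x \<in> V" and a: "(par ^^ a) x = c1" and b: "(par ^^ b) x = c2"
    by (auto simp: up_def)
  have d: "dist c1 = dist c2" using dist_ch[OF c(1) v(2)] dist_ch[OF c(2) v(2)] by simp
  have c1V: "c1 \<in> V" "c1 \<noteq> j" "c2 \<in> V" "c2 \<noteq> j" using c by (auto simp: ch_def)
  have dpos: "dist c1 > 0" "dist c2 > 0" using dist_0 c1V by auto
  consider "a = b" | "a < b" | "b < a" by linarith
  then show False
  proof cases
    case 1 then show ?thesis using a b c by simp
  next
    case 2
    have "(par ^^ (b - a)) c1 = c2" using a b 2 funpow_le[of a b par x] by simp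
    then have "dist c2 = dist c1 - (b - a)" using dist_P[OF c1V(1), of "b - a"] by simp
    then show ?thesis using d dpos 2 by simp
  next
    case 3
    have "(par ^^ (a - b)) c2 = c1" using a b 3 funpow_le[of b a par x] by simp
    then have "dist c1 = dist c2 - (a - b)" using dist_P[OF c1V(3), of "a - b"] by simp
    then show ?thesis using d dpos 3 by simp
  qed
qed

lemma M_rec: "v \<in> V \<Longrightarrow> v \<noteq> j \<Longrightarrow> M v = (\<Sum>c\<in>ch v. M c + 1)"
proof -
  assume v: "v \<in> V" "v \<noteq> j"
  have "M v = card (\<Union>c\<in>ch v. up c)" unfolding M_def desc_eq[OF v] ..
  also have "\<dots> = (\<Sum>c\<in>ch v. card (up c))"
    by (rule card_UN_disjoint) (use fin_ch fin_up up_disj[OF v] in auto)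
  also have "\<dots> = (\<Sum>c\<in>ch v. M c + 1)"
  proof (rule sum.cong)
    fix c assume "c \<in> ch v"
    then have "c \<in> V" by (simp add: ch_def)
    have "finite (desc c)" "c \<notin> desc c" using fin_up[of c] by (auto simp: desc_def)
    then show "card (up c) = M c + 1" unfolding M_def up_ch[OF \<open>c \<in> V\<close>] by simp
  qed simp
  finally show ?thesis .
qed

definition kk :: "'a \<Rightarrow> real" where "kk v = real (card (ch v))"
definition gg :: "'a \<Rightarrow> 'a \<Rightarrow> real" where
  "gg v c = 1 + (2 * kk v * real (M v) - 2 * (real (M c) + 1)) / (kk v + 1)"
definition G :: "'a \<Rightarrow> real" where "G x = gg (par x) x"
definition H :: "'a \<Rightarrow> real" where "H v = (\<Sum>k < dist v - 1. G ((par ^^ k) v))"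
definition Dn :: "'a \<Rightarrow> real" where "Dn v = 2 * real (M v) + 1 + H v"

lemma H_rec: "v \<in> V \<Longrightarrow> v \<noteq> j \<Longrightarrow> par v \<noteq> j \<Longrightarrow> H v = G v + H (par v)"
proof -
  assume v: "v \<in> V" "v \<noteq> j" "par v \<noteq> j"
  have d: "dist (par v) = dist v - 1" using dist_par v by simp
  have "dist (par v) \<noteq> 0" using dist_0 par_V v by auto
  then have e: "dist v - 1 = Suc (dist (par v) - 1)" using d by simp
  show ?thesis unfolding H_def e sum.lessThan_Suc_shift
    by (simp add: funpow_Suc_right del: funpow.simps)
qed

lemma H_j: "v \<in> V \<Longrightarrow> v \<noteq> j \<Longrightarrow> par v = j \<Longrightarrow> H v = 0"
  using dist_par[of v] dist_j by (simp add: H_def)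

lemma gg_nonneg: "v \<in> V \<Longrightarrow> v \<noteq> j \<Longrightarrow> c \<in> ch v \<Longrightarrow> gg v c \<ge> 0"
proof -
  assume v: "v \<in> V" "v \<noteq> j" and c: "c \<in> ch v"
  have "M c + 1 \<le> M v" unfolding M_rec[OF v]
    by (rule member_le_sum[where f="\<lambda>c. M c + 1", OF c]) (auto simp: fin_ch)
  then have le: "real (M c) + 1 \<le> real (M v)" by linarith
  have "card (ch v) > 0" using c fin_ch[of v] card_gt_0_iff by blast
  then have "kk v \<ge> 1" unfolding kk_def by linarith
  then have t: "real (M v) \<le> kk v * real (M v)" using mult_right_mono[of 1 "kk v" "real (M v)"] by simp
  have t2: "real (M c) + 1 \<le> kk v * real (M v)" using le t by (rule order_trans)
  have "2 * (kk v * real (M v)) - 2 * (real (M c) + 1) \<ge> 0" using t2 by simp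
  then have "2 * kk v * real (M v) - 2 * (real (M c) + 1) \<ge> 0" by (simp add: mult.assoc)
  moreover have "kk v + 1 > 0" using \<open>kk v \<ge> 1\<close> by simp
  ultimately show ?thesis unfolding gg_def by simp
qed

lemma H_nonneg: "v \<in> V \<Longrightarrow> H v \<ge> 0"
proof -
  assume vV: "v \<in> V"
  show ?thesis unfolding H_def
  proof (rule sum_nonneg)
    fix k assume "k \<in> {..<dist v - 1}"
    then have k: "k < dist v - 1" by simp
    let ?x = "(par ^^ k) v"
    have xV: "?x \<in> V" using P_V[OF vV] .
    have dx: "dist ?x = dist v - k" using dist_P[OF vV] .
    then have xj: "?x \<noteq> j" using k dist_j by auto
    have "dist (par ?x) = dist ?x - 1" using dist_par[OF xV xj] .
    then have pxj: "par ?x \<noteq> j" using dx k dist_j by auto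
    have "?x \<in> ch (par ?x)" using xV xj by (simp add: ch_def)
    then show "G ?x \<ge> 0" unfolding G_def using gg_nonneg par_V[OF xV] pxj by blast
  qed
qed

lemma sum_identity:
  assumes v: "v \<in> V" "v \<noteq> j"
  shows "(\<Sum>c\<in>ch v. 2 * real (M c) + 1 + gg v c) = 2 * kk v * real (M v)"
proof -
  define k where "k = kk v"
  define m where "m = real (M v)"
  have kc: "real (card (ch v)) = k" by (simp add: k_def kk_def)
  have s1: "(\<Sum>c\<in>ch v. real (M c) + 1) = m"
    unfolding m_def by (subst M_rec[OF v]) (simp only: of_nat_sum of_nat_add of_nat_1)
  have s2: "(\<Sum>c\<in>ch v. gg v c) = k + (k * (2 * k * m) - 2 * m) / (k + 1)"
  proof -
    have inner0: "(\<Sum>c\<in>ch v. 2 * k * m - 2 * (real (M c) + 1)) = k * (2 * k * m) - 2 * (\<Sum>c\<in>ch v. real (M c) + 1)"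
      by (simp add: sum_subtractf sum_distrib_left kc)
    have inner: "(\<Sum>c\<in>ch v. 2 * k * m - 2 * (real (M c) + 1)) = k * (2 * k * m) - 2 * m"
      unfolding inner0 s1 ..
    have "(\<Sum>c\<in>ch v. gg v c) = (\<Sum>c\<in>ch v. 1 + (2 * k * m - 2 * (real (M c) + 1)) / (k + 1))"
      unfolding gg_def k_def m_def ..
    also have "\<dots> = k + (\<Sum>c\<in>ch v. 2 * k * m - 2 * (real (M c) + 1)) / (k + 1)"
      by (simp only: sum.distrib sum_divide_distrib kc sum_constant, (simp)?)
    also have "\<dots> = k + (k * (2 * k * m) - 2 * m) / (k + 1)" unfolding inner ..
    finally show ?thesis .
  qed
  have s3: "(\<Sum>c\<in>ch v. 2 * real (M c) + 1) = 2 * m - k"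
  proof -
    have sM: "(\<Sum>c\<in>ch v. real (M c)) = m - k" using s1 by (simp add: sum.distrib kc)
    have "(\<Sum>c\<in>ch v. 2 * real (M c) + 1) = 2 * (\<Sum>c\<in>ch v. real (M c)) + k"
      by (simp add: sum.distrib sum_distrib_left kc)
    then show ?thesis using sM by simp
  qed
  have kpos: "k + 1 > 0" by (simp add: k_def kk_def add_pos_nonneg)
  have e: "k * (2 * k * m) - 2 * m = (2 * m * (k - 1)) * (k + 1)" by (simp add: algebra_simps)
  have "(\<Sum>c\<in>ch v. 2 * real (M c) + 1 + gg v c) = (\<Sum>c\<in>ch v. 2 * real (M c) + 1) + (\<Sum>c\<in>ch v. gg v c)"
    by (rule sum.distrib)
  also have "\<dots> = (2 * m - k) + (k + 2 * m * (k - 1))"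
    unfolding s2 s3 e using kpos by simp
  also have "\<dots> = 2 * k * m" by (simp add: algebra_simps)
  finally show ?thesis by (simp add: k_def m_def)
qed

end



lemma reach_refl: "reachable E' v v"
  unfolding reachable_def by (intro exI[of _ "[v]"]) (simp add: is_walk_def)

lemma reach_snoc:
  assumes "reachable E' a b" "{b, c} \<in> E'"
  shows "reachable E' a c"
proof -
  obtain xs where xs: "is_walk E' xs" "hd xs = a" "last xs = b" using assms(1) unfolding reachable_def by blast
  have ne: "xs \<noteq> []" using xs(1) by (simp add: is_walk_def)
  have "is_walk E' (xs @ [c])" unfolding is_walk_def
  proof (intro conjI allI impI)
    fix m assume m: "Suc m < length (xs @ [c])"
    show "{(xs @ [c]) ! m, (xs @ [c]) ! Suc m} \<in> E'"
    proof (cases "Suc m < length xs")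
      case True then show ?thesis using xs(1) by (simp add: is_walk_def nth_append)
    next
      case False
      then have sm: "Suc m = length xs" using m by simp
      then have m1: "m = length xs - 1" "m < length xs" by auto
      have "(xs @ [c]) ! m = b" using m1 xs(3) ne by (simp add: nth_append last_conv_nth)
      moreover have "(xs @ [c]) ! Suc m = c" using sm by (simp add: nth_append)
      ultimately have "(xs @ [c]) ! m = b" "(xs @ [c]) ! Suc m = c" by auto
      then show ?thesis using assms(2) by simp
    qed
  qed simp
  moreover have "hd (xs @ [c]) = a" using xs ne by simp
  moreover have "last (xs @ [c]) = c" by simp
  ultimately show ?thesis unfolding reachable_def by blast
qed

lemma sum_bb_ne:
  assumes fin: "finite X" and S: "nbrs E v - {u} \<noteq> {}"
  shows "(\<Sum>w\<in>X. bb_step E u v w * f w) = (\<Sum>w\<in>X \<inter> (nbrs E v - {u}). f w) / real (card (nbrs E v - {u}))"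
proof -
  let ?S = "nbrs E v - {u}"
  have "(\<Sum>w\<in>X. bb_step E u v w * f w) = (\<Sum>w\<in>X. if w \<in> ?S then f w / real (card ?S) else 0)"
    by (rule sum.cong) (use S in \<open>auto simp: bb_step_def\<close>)
  also have "\<dots> = (\<Sum>w\<in>X \<inter> ?S. f w / real (card ?S))" by (simp add: sum.inter_restrict fin)
  also have "\<dots> = (\<Sum>w\<in>X \<inter> ?S. f w) / real (card ?S)" by (simp add: sum_divide_distrib)
  finally show ?thesis .
qed

lemma sum_bb_e:
  assumes fin: "finite X" and S: "nbrs E v - {u} = {}"
  shows "(\<Sum>w\<in>X. bb_step E u v w * f w) = (if u \<in> X then f u else 0)"
proof -
  have "(\<Sum>w\<in>X. bb_step E u v w * f w) = (\<Sum>w\<in>X. if w = u then f w else 0)"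
    by (rule sum.cong) (use S in \<open>auto simp: bb_step_def\<close>)
  also have "\<dots> = (if u \<in> X then f u else 0)" using fin by (simp add: sum.delta')
  finally show ?thesis .
qed

lemma bb_nonneg: "bb_step E u v w \<ge> 0"
  by (simp add: bb_step_def)

locale rti = rt +
  fixes i assumes iV: "i \<in> V" and ij: "i \<noteq> j" and pi: "par i = j"
begin

definition valid :: "'a \<Rightarrow> 'a \<Rightarrow> bool" where
  "valid u v = ((v \<in> V \<and> v \<noteq> j \<and> {u, v} \<in> E) \<or> (u = i \<and> v = i))"

definition hh :: "'a \<Rightarrow> 'a \<Rightarrow> real" where
  "hh u v = (if u = i \<and> v = i then 1 + (\<Sum>c\<in>ch i. Dn c) / (kk i + 1)
             else if u = par v then Dn v else gg v u + H v)"

lemma X_fin: "finite (V - {j})" using finV by simp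

lemma hh_par: "v \<in> V \<Longrightarrow> v \<noteq> j \<Longrightarrow> par v \<noteq> j \<Longrightarrow> hh v (par v) = H v"
  unfolding hh_def using par_par[of v] pi H_rec[of v] by (auto simp: G_def)

lemma hh_ch: "c \<in> ch v \<Longrightarrow> hh v c = Dn c"
  unfolding hh_def using pi ij by (auto simp: ch_def)

lemma Dn_ch: "v \<in> V \<Longrightarrow> v \<noteq> j \<Longrightarrow> c \<in> ch v \<Longrightarrow> Dn c = 2 * real (M c) + 1 + gg v c + H v"
  unfolding Dn_def using H_rec[of c] by (auto simp: ch_def G_def)

lemma Dn_nonneg: "v \<in> V \<Longrightarrow> Dn v \<ge> 0"
  unfolding Dn_def using H_nonneg[of v] by simp

lemma kk_nonneg: "kk v \<ge> 0" by (simp add: kk_def)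

lemma sum_Dn: "v \<in> V \<Longrightarrow> v \<noteq> j \<Longrightarrow> (\<Sum>c\<in>ch v. Dn c) = 2 * kk v * real (M v) + kk v * H v"
proof -
  assume v: "v \<in> V" "v \<noteq> j"
  have "(\<Sum>c\<in>ch v. Dn c) = (\<Sum>c\<in>ch v. (2 * real (M c) + 1 + gg v c) + H v)"
    by (rule sum.cong) (use Dn_ch[OF v] in auto)
  also have "\<dots> = (\<Sum>c\<in>ch v. 2 * real (M c) + 1 + gg v c) + (\<Sum>c\<in>ch v. H v)"
    by (rule sum.distrib)
  also have "\<dots> = 2 * kk v * real (M v) + kk v * H v"
    unfolding sum_identity[OF v] sum_constant kk_def by simp
  finally show ?thesis .
qed

lemma valid_V: "valid u v \<Longrightarrow> u \<in> V \<and> v \<in> V"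
proof -
  assume "valid u v"
  then consider "u = i" "v = i" | "{u, v} \<in> E" unfolding valid_def by blast
  then show ?thesis
  proof cases
    case 1 then show ?thesis using iV by simp
  next
    case 2 then show ?thesis using edge_V[of u v] by simp
  qed
qed

lemma valid_cases:
  assumes "valid u v"
  obtains (start) "u = i" "v = i"
    | (down) "v \<in> V" "v \<noteq> j" "u = par v" "u \<noteq> v"
    | (upw) "v \<in> V" "v \<noteq> j" "u \<in> ch v" "u \<noteq> par v" "u \<noteq> v"
proof -
  consider "u = i \<and> v = i" | "v \<in> V \<and> v \<noteq> j \<and> {u, v} \<in> E" using assms unfolding valid_def by blast
  then show ?thesis
  proof cases
    case 1 then show ?thesis by (intro start) simp_all
  next
    case 2
    then have uv: "u \<noteq> v" "u \<in> V" using edge_V[of u v] by simp_all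
    show ?thesis
    proof (cases "u = par v")
      case True then show ?thesis using 2 uv by (intro down) simp_all
    next
      case False
      have "(u \<noteq> j \<and> v = par u) \<or> (v \<noteq> j \<and> u = par v)" using N[of u v] 2 by simp
      then have "u \<noteq> j" "v = par u" using False by simp_all
      then have "u \<in> ch v" using uv by (simp add: ch_def)
      then show ?thesis using 2 uv False by (intro upw) simp_all
    qed
  qed
qed

lemma i_notin_nbrs: "i \<notin> nbrs E i"
  using edge_V[of i i] by (auto simp: nbrs_def)

lemma eqn: "valid u v \<Longrightarrow> hh u v = 1 + (\<Sum>w\<in>V - {j}. bb_step E u v w * hh v w)"
proof (induction rule: valid_cases)
  case start
  have S: "nbrs E i - {i} = insert j (ch i)" using nbrs_eq[OF iV ij] pi i_notin_nbrs by auto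
  have jch: "j \<notin> ch i" by (simp add: ch_def)
  have cS: "real (card (nbrs E i - {i})) = kk i + 1"
    unfolding S using jch fin_ch by (simp add: kk_def)
  have XS: "(V - {j}) \<inter> (nbrs E i - {i}) = ch i" unfolding S by (auto simp: ch_def)
  have "(\<Sum>w\<in>V - {j}. bb_step E i i w * hh i w) = (\<Sum>c\<in>ch i. hh i c) / (kk i + 1)"
    using sum_bb_ne[OF X_fin, of E i i "hh i"] S XS cS by simp
  also have "\<dots> = (\<Sum>c\<in>ch i. Dn c) / (kk i + 1)" by (simp add: hh_ch)
  finally show ?case using start by (simp add: hh_def)
next
  case down
  have hv: "hh u v = Dn v" using down ij pi by (auto simp: hh_def)
  have S: "nbrs E v - {u} = ch v" using nbrs_eq[OF down(1,2)] par_notin_ch[OF down(1,2)] down(3) by auto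
  show ?case
  proof (cases "ch v = {}")
    case True
    have M0: "M v = 0" using M_rec[OF down(1,2)] True by simp
    have "(\<Sum>w\<in>V - {j}. bb_step E u v w * hh v w) = (if u \<in> V - {j} then hh v u else 0)"
      using sum_bb_e[OF X_fin, of E v u "hh v"] S True by simp
    also have "\<dots> = H v"
    proof (cases "par v = j")
      case True then show ?thesis using H_j[OF down(1,2)] down(3) by simp
    next
      case False then show ?thesis using hh_par[OF down(1,2)] down(3) par_V[OF down(1)] by simp
    qed
    finally show ?thesis using hv M0 by (simp add: Dn_def)
  next
    case False
    have kpos: "kk v > 0" using False fin_ch[of v] by (simp add: kk_def card_gt_0_iff)
    have XS: "(V - {j}) \<inter> (nbrs E v - {u}) = ch v" unfolding S by (auto simp: ch_def)
    have "(\<Sum>w\<in>V - {j}. bb_step E u v w * hh v w) = (\<Sum>c\<in>ch v. hh v c) / kk v"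
      using sum_bb_ne[OF X_fin, of E v u "hh v"] S XS False by (simp add: kk_def)
    also have "\<dots> = (\<Sum>c\<in>ch v. Dn c) / kk v" by (simp add: hh_ch)
    also have "\<dots> = 2 * real (M v) + H v"
      unfolding sum_Dn[OF down(1,2)] using kpos by (simp add: field_simps)
    finally show ?thesis using hv by (simp add: Dn_def)
  qed
next
  case upw
  have hv: "hh u v = gg v u + H v" using upw ij by (auto simp: hh_def)
  have chne: "ch v \<noteq> {}" using upw by auto
  define k where "k = kk v"
  have kpos: "k \<ge> 1" using upw fin_ch[of v] card_gt_0_iff[of "ch v"] by (auto simp: kk_def k_def)
  have S: "nbrs E v - {u} = insert (par v) (ch v - {u})"
    using nbrs_eq[OF upw(1,2)] par_notin_ch[OF upw(1,2)] upw by auto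
  have cS: "real (card (nbrs E v - {u})) = k"
  proof -
    have "card (nbrs E v - {u}) = Suc (card (ch v - {u}))"
      unfolding S using par_notin_ch[OF upw(1,2)] fin_ch by simp
    also have "\<dots> = card (ch v)"
    proof -
      have "card (ch v) > 0" using upw(3) fin_ch[of v] card_gt_0_iff by blast
      then show ?thesis using upw(3) fin_ch[of v] by (simp add: card_Diff_singleton)
    qed
    finally show ?thesis by (simp add: k_def kk_def)
  qed
  have Hpar: "(if par v = j then 0 else hh v (par v)) = H v"
    using H_j[OF upw(1,2)] hh_par[OF upw(1,2)] by auto
  have pvV: "par v \<in> V" using par_V upw by blast
  have sumX: "(\<Sum>w\<in>(V - {j}) \<inter> (nbrs E v - {u}). hh v w)
      = (if par v = j then 0 else hh v (par v)) + (\<Sum>c\<in>ch v - {u}. hh v c)"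
  proof (cases "par v = j")
    case True
    have "(V - {j}) \<inter> (nbrs E v - {u}) = ch v - {u}" unfolding S using True by (auto simp: ch_def)
    then show ?thesis using True by simp
  next
    case False
    have "(V - {j}) \<inter> (nbrs E v - {u}) = insert (par v) (ch v - {u})" unfolding S
      using False pvV by (auto simp: ch_def)
    moreover have "par v \<notin> ch v - {u}" using par_notin_ch[OF upw(1,2)] by simp
    ultimately show ?thesis using False fin_ch by simp
  qed
  have sumch: "(\<Sum>c\<in>ch v - {u}. hh v c) = (\<Sum>c\<in>ch v - {u}. 2 * real (M c) + 1 + gg v c) + (k - 1) * H v"
  proof -
    have "(\<Sum>c\<in>ch v - {u}. hh v c) = (\<Sum>c\<in>ch v - {u}. (2 * real (M c) + 1 + gg v c) + H v)"
      by (rule sum.cong) (use hh_ch Dn_ch[OF upw(1,2)] in auto)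
    also have "\<dots> = (\<Sum>c\<in>ch v - {u}. 2 * real (M c) + 1 + gg v c) + real (card (ch v - {u})) * H v"
      by (simp add: sum.distrib)
    also have "real (card (ch v - {u})) = k - 1"
    proof -
      have "card (ch v) \<ge> 1" using upw(3) fin_ch[of v] card_gt_0_iff[of "ch v"] by auto
      then show ?thesis using upw(3) fin_ch[of v] by (simp add: card_Diff_singleton k_def kk_def of_nat_diff)
    qed
    finally show ?thesis .
  qed
  have rem: "(\<Sum>c\<in>ch v - {u}. 2 * real (M c) + 1 + gg v c) = 2 * k * real (M v) - (2 * real (M u) + 1 + gg v u)"
    using sum_diff1[of "ch v" "\<lambda>c. 2 * real (M c) + 1 + gg v c" u] sum_identity[OF upw(1,2)] upw(3) fin_ch
    by (simp add: k_def)
  have "(\<Sum>w\<in>V - {j}. bb_step E u v w * hh v w)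
      = (H v + (2 * k * real (M v) - (2 * real (M u) + 1 + gg v u)) + (k - 1) * H v) / k"
    using sum_bb_ne[OF X_fin, of E v u "hh v"] S cS sumX Hpar sumch rem by simp
  also have "\<dots> = gg v u + H v - 1"
  proof -
    have g: "gg v u * (k + 1) = (k + 1) + (2 * k * real (M v) - 2 * (real (M u) + 1))"
      unfolding gg_def k_def[symmetric] using kpos by (simp add: field_simps)
    show ?thesis using kpos g by (simp add: field_simps)
  qed
  finally show ?case using hv by simp
qed

lemma step_valid: "valid u v \<Longrightarrow> w \<in> V - {j} \<Longrightarrow> bb_step E u v w \<noteq> 0 \<Longrightarrow> valid v w"
proof -
  assume uv: "valid u v" and w: "w \<in> V - {j}" and b: "bb_step E u v w \<noteq> 0"
  show "valid v w"
  proof (cases "nbrs E v - {u} = {}")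
    case False
    then have "w \<in> nbrs E v" using b by (auto simp: bb_step_def split: if_splits)
    then show ?thesis using w by (auto simp: valid_def nbrs_def insert_commute)
  next
    case True
    then have wu: "w = u" using b by (auto simp: bb_step_def split: if_splits)
    have "\<not> (u = i \<and> v = i)"
    proof
      assume "u = i \<and> v = i"
      moreover have "j \<in> nbrs E i" using par_nb[OF iV ij] pi by (simp add: nbrs_def insert_commute)
      ultimately show False using True ij by auto
    qed
    then show ?thesis using uv w wu by (auto simp: valid_def insert_commute)
  qed
qed

lemma hh_nonneg: "valid u v \<Longrightarrow> hh u v \<ge> 0"
proof (induction rule: valid_cases)
  case start
  have "(\<Sum>c\<in>ch i. Dn c) \<ge> 0" by (intro sum_nonneg Dn_nonneg) (simp add: ch_def)
  then show ?case using start kk_nonneg[of i] by (simp add: hh_def)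
next
  case down then show ?case using Dn_nonneg[of v] ij by (auto simp: hh_def)
next
  case upw then show ?case using gg_nonneg[of v u] H_nonneg[of v] ij by (auto simp: hh_def)
qed

lemma hh_value: "hh i i = 1 + 2 * real (M i) * kk i / (kk i + 1)"
  unfolding hh_def using sum_Dn[OF iV ij] H_j[OF iV ij pi] by (simp add: algebra_simps)

lemma closure_up: "y \<in> up i \<Longrightarrow> {y, z} \<in> E \<Longrightarrow> {y, z} \<noteq> {i, j} \<Longrightarrow> z \<in> up i"
proof -
  assume y: "y \<in> up i" and e: "{y, z} \<in> E" and ne: "{y, z} \<noteq> {i, j}"
  obtain k where yV: "y \<in> V" and k: "(par ^^ k) y = i" using y by (auto simp: up_def)
  have zV: "z \<in> V" using edge_V[OF e] by blast
  consider "y \<noteq> j" "z = par y" | "z \<noteq> j" "y = par z" using N[OF e] by blast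
  then show ?thesis
  proof cases
    case 1
    show ?thesis
    proof (cases k)
      case 0
      then have "y = i" using k by simp
      then have "z = j" using 1 pi by simp
      then show ?thesis using ne \<open>y = i\<close> by simp
    next
      case (Suc k')
      then have "(par ^^ k') z = i" using k 1 by (simp add: funpow_Suc_right del: funpow.simps)
      then show ?thesis using zV by (auto simp: up_def)
    qed
  next
    case 2
    then have "(par ^^ Suc k) z = i" using k by (simp add: funpow_Suc_right del: funpow.simps)
    then show ?thesis using zV unfolding up_def by blast
  qed
qed

lemma comp_vertices_eq: "comp_vertices V E i j = up i"
proof (intro set_eqI iffI)
  fix x assume "x \<in> comp_vertices V E i j"
  then obtain xs where xV: "x \<in> V" and xs: "is_walk (E - {{i, j}}) xs" "hd xs = i" "last xs = x"
    by (auto simp: comp_vertices_def reachable_def)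
  have ne: "xs \<noteq> []" using xs(1) by (simp add: is_walk_def)
  have "\<forall>m. m < length xs \<longrightarrow> xs ! m \<in> up i"
  proof (intro allI)
    fix m show "m < length xs \<longrightarrow> xs ! m \<in> up i"
    proof (induction m)
      case 0 then show ?case using xs(2) ne iV by (auto simp: hd_conv_nth up_def intro: exI[of _ 0])
    next
      case (Suc m)
      show ?case
      proof
        assume m: "Suc m < length xs"
        then have "{xs ! m, xs ! Suc m} \<in> E - {{i, j}}" using xs(1) by (simp add: is_walk_def)
        then show "xs ! Suc m \<in> up i" using closure_up Suc m by auto
      qed
    qed
  qed
  moreover have "length xs - 1 < length xs" using ne by simp
  ultimately have "xs ! (length xs - 1) \<in> up i" by blast
  then show "x \<in> up i" using xs(3) ne by (simp add: last_conv_nth)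
next
  fix x assume "x \<in> up i"
  then obtain k where xV: "x \<in> V" and k: "(par ^^ k) x = i" by (auto simp: up_def)
  have "reachable (E - {{i, j}}) i x" using xV k
  proof (induction k arbitrary: x)
    case 0 then show ?case by (simp add: reach_refl)
  next
    case (Suc k)
    have k': "(par ^^ k) (par x) = i" using Suc.prems by (simp add: funpow_Suc_right del: funpow.simps)
    have xj: "x \<noteq> j" using Suc.prems P_j[of "Suc k"] ij by auto
    have r: "reachable (E - {{i, j}}) i (par x)" using Suc.IH[OF par_V[OF Suc.prems(1)] k'] .
    have e: "{par x, x} \<in> E" using par_nb[OF Suc.prems(1) xj] by (simp add: insert_commute)
    have "{par x, x} \<noteq> {i, j}"
    proof
      assume a: "{par x, x} = {i, j}"
      then have "x = i" using xj by (auto simp: doubleton_eq_iff)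
      then have "(par ^^ k) j = i" using k' pi by simp
      then show False using P_j ij by simp
    qed
    then show ?case using reach_snoc[OF r] e by blast
  qed
  then show "x \<in> comp_vertices V E i j" using xV by (simp add: comp_vertices_def)
qed

lemma comp_edges_eq: "comp_edges V E i j = (\<lambda>x. {x, par x}) ` desc i"
proof (intro set_eqI iffI)
  fix e assume "e \<in> comp_edges V E i j"
  then have eE: "e \<in> E" and ne: "e \<noteq> {i, j}" and sub: "e \<subseteq> up i"
    by (auto simp: comp_edges_def comp_vertices_eq)
  obtain a b where ab: "e = {a, b}" using eE gr unfolding graph_def by (meson card_2_iff)
  consider "a \<noteq> j" "b = par a" | "b \<noteq> j" "a = par b" using N eE ab by blast
  then show "e \<in> (\<lambda>x. {x, par x}) ` desc i"
  proof cases
    case 1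
    have "a \<noteq> i" using ne ab 1 pi by auto
    then have "a \<in> desc i" using sub ab by (simp add: desc_def)
    then show ?thesis using ab 1 by blast
  next
    case 2
    have "b \<noteq> i" using ne ab 2 pi by auto
    then have "b \<in> desc i" using sub ab by (simp add: desc_def)
    moreover have "e = {b, par b}" using ab 2 by (simp add: insert_commute)
    ultimately show ?thesis by blast
  qed
next
  fix e assume "e \<in> (\<lambda>x. {x, par x}) ` desc i"
  then obtain x where x: "x \<in> desc i" and ex: "e = {x, par x}" by blast
  then obtain k where xV: "x \<in> V" and xi: "x \<noteq> i" and k: "(par ^^ k) x = i" by (auto simp: desc_def up_def)
  have xj: "x \<noteq> j"
  proof
    assume "x = j"
    then have "(par ^^ k) j = i" using k by simp
    then show False using P_j[of k] ij by simp
  qed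
  have eE: "e \<in> E" using par_nb[OF xV xj] ex by simp
  have ne: "e \<noteq> {i, j}" using ex xi xj by (auto simp: doubleton_eq_iff)
  have xu: "x \<in> up i" using x by (simp add: desc_def)
  have "par x \<in> up i"
    using closure_up[OF xu] eE ex ne by simp
  then have "e \<subseteq> up i" using ex xu by simp
  then show "e \<in> comp_edges V E i j" using eE ne
    by (simp add: comp_edges_def comp_vertices_eq)
qed

lemma card_comp_edges: "card (comp_edges V E i j) = M i"
proof -
  have "inj_on (\<lambda>x. {x, par x}) (desc i)"
  proof (rule inj_onI)
    fix x y assume x: "x \<in> desc i" and y: "y \<in> desc i" and eq: "{x, par x} = {y, par y}"
    have xV: "x \<in> V" "y \<in> V" using x y by (auto simp: desc_def up_def)
    have xj: "x \<noteq> j" "y \<noteq> j" using x y P_j ij by (auto simp: desc_def up_def)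
    show "x = y"
    proof (rule ccontr)
      assume "x \<noteq> y"
      then have "x = par y" "y = par x" using eq by (auto simp: doubleton_eq_iff)
      then show False using par_par[OF xV(1) xj(1)] by simp
    qed
  qed
  then show ?thesis unfolding comp_edges_eq M_def by (rule card_image)
qed

lemma degree_i: "degree E i = card (ch i) + 1"
proof -
  have "nbrs E i = insert j (ch i)" using nbrs_eq[OF iV ij] pi by simp
  moreover have "j \<notin> ch i" by (simp add: ch_def)
  ultimately show ?thesis using fin_ch by (simp add: degree_def)
qed

end

lemma prod_bbp:
  "(\<Prod>m<length ys. K ((u # v # ys) ! m) ((u # v # ys) ! Suc m) ((u # v # ys) ! Suc (Suc m))) = bbp K u v ys"
proof (induction ys arbitrary: u v)
  case Nil then show ?case by simp
next
  case (Cons w ys)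
  show ?case
    by (simp only: length_Cons prod.lessThan_Suc_shift) (simp add: Cons.IH[symmetric])
qed

lemma path_prob_bbp:
  assumes "v \<notin> nbrs E v" "nbrs E v \<noteq> {}"
  shows "path_prob E (v # ys) = bbp (bb_step E) v v ys"
proof (cases ys)
  case Nil then show ?thesis by (simp add: path_prob_def)
next
  case (Cons w zs)
  have fs: "first_step E v w = bb_step E v v w"
    using assms by (simp add: first_step_def bb_step_def)
  have "path_prob E (v # ys) = first_step E v w *
      (\<Prod>m<length zs. bb_step E ((v # w # zs) ! m) ((v # w # zs) ! Suc m) ((v # w # zs) ! Suc (Suc m)))"
    by (simp add: path_prob_def Cons)
  also have "\<dots> = bb_step E v v w * bbp (bb_step E) v w zs" by (simp only: prod_bbp fs)
  finally show ?thesis using Cons by simp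
qed

theorem lemma7:
  fixes V :: "'a set" and E :: "'a set set" and i j :: 'a
  assumes "tree V E"
    and "{i, j} \<in> E"
  shows "access_time V E i j =
           ennreal (1 + 2 * real (card (comp_edges V E i j)) *
                    (real (degree E i) - 1) / real (degree E i))"
proof -
  have g: "graph V E" and c: "connected_graph V E" and nc: "\<not> (\<exists>xs. is_cycle E xs)"
    using assms(1) by (auto simp: tree_def)
  have ijV: "i \<in> V" "j \<in> V" using g assms(2) by (auto simp: graph_def)
  obtain par dist where r0: "rt0 V E j par dist" using rt0_exists[OF g c ijV(2)] by blast
  have r: "rt V E j par dist"
    using r0 rt0.N_of_acyclic[OF r0 nc] by (simp add: rt_def rt_axioms_def)
  have ij: "i \<noteq> j" using rt0.edge_V[OF r0 assms(2)] by simp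
  have pi: "par i = j" using rt.N[OF r assms(2)] by simp
  interpret R: rti V E j par dist i
    using r ijV ij pi by (simp add: rti_def rti_axioms_def)
  define B where "B = (\<Sum>p\<in>V \<times> V. \<bar>R.hh (fst p) (snd p)\<bar>)"
  have hB: "R.hh u v \<le> B" if "R.valid u v" for u v
  proof -
    have "(u, v) \<in> V \<times> V" using R.valid_V[OF that] by simp
    then have "\<bar>R.hh u v\<bar> \<le> B" unfolding B_def
      using member_le_sum[of "(u, v)" "V \<times> V" "\<lambda>p. \<bar>R.hh (fst p) (snd p)\<bar>"] R.finV by simp
    then show ?thesis by simp
  qed
  have vi: "R.valid i i" by (simp add: R.valid_def)
  have sums: "(\<lambda>n. \<Sum>ys\<in>Ls (V - {j}) n. bbp (bb_step E) i i ys) sums R.hh i i"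
    by (rule hitting_sums[where P = R.valid, OF R.X_fin bb_nonneg R.eqn R.step_valid R.hh_nonneg hB vi])
  have inn: "i \<notin> nbrs E i" by (rule R.i_notin_nbrs)
  have nne: "nbrs E i \<noteq> {}" using R.nbrs_eq[OF ijV(1) ij] by simp
  have tp: "tail_prob V E i j n = (\<Sum>ys\<in>Ls (V - {j}) n. bbp (bb_step E) i i ys)" for n
  proof -
    have set: "{xs. length xs = Suc n \<and> xs ! 0 = i \<and> set xs \<subseteq> V \<and> j \<notin> set xs} = (\<lambda>ys. i # ys) ` Ls (V - {j}) n"
    proof (intro set_eqI iffI)
      fix xs assume "xs \<in> {xs. length xs = Suc n \<and> xs ! 0 = i \<and> set xs \<subseteq> V \<and> j \<notin> set xs}"
      then show "xs \<in> (\<lambda>ys. i # ys) ` Ls (V - {j}) n"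
        by (cases xs) (auto simp: Ls_def)
    qed (use ijV ij in \<open>auto simp: Ls_def\<close>)
    show ?thesis unfolding tail_prob_def set
      by (subst sum.reindex) (auto simp: inj_on_def path_prob_bbp[OF inn nne])
  qed
  have nn: "0 \<le> tail_prob V E i j n" for n
    unfolding tp by (intro sum_nonneg bbp_nonneg bb_nonneg)
  have "access_time V E i j = ennreal (R.hh i i)"
    unfolding access_time_def by (rule suminf_ennreal_eq[OF nn]) (use sums tp in simp)
  also have "R.hh i i = 1 + 2 * real (card (comp_edges V E i j)) * (real (degree E i) - 1) / real (degree E i)"
  proof -
    have deg: "real (degree E i) = R.kk i + 1" by (simp add: R.degree_i R.kk_def)
    show ?thesis unfolding R.hh_value R.card_comp_edges deg by simp
  qed
  finally show ?thesis .
qed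


end
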